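(* Let $n\in\mathbb{N}$ and let $f_t:[0,1]^n\to\mathbb{R}$ be differentiable, convex and bounded on $[0,1]^n$ with $\|\nabla f_t(\mathbf{x})\|_2\le L_2$ for all $\mathbf{x}\in[0,1]^n$, where $L_2\in(0,\infty)$. Let $\mathbf{x}_t\in[0,1]^n$ and let the binary decision $\hat{\mathbf{x}}_t=\mathcal{R}(\mathbf{x}_t)$ be computed by \texttt{bOGD} (described in the context). Then \[ \mathbb{E}\big[|f_t(\hat{\mathbf{x}}_t)-f_t(\mathbf{x}_t)|\big]\le \frac{L_2\sqrt{n}}{2}. \]
   Context: \texttt{bOGD} (binary online gradient descent) for a sequence of losses $f_1,f_2,\dots$ on $[0,1]^n$, with step size $\eta>0$ and $\lambda\ge0$: choose $\mathbf{x}_1\in[0,1]^n$; for each round $t$, implement $\hat{\mathbf{x}}_t=\mathcal{R}(\mathbf{x}_t)$, then observe $f_t$ and set $\mathbf{x}_{t+1}=\arg\min_{\mathbf{x}\in[0,1]^n}\ \eta\nabla f_t(\mathbf{x}_t)^\top\mathbf{x}+\tfrac12\|\mathbf{x}-\mathbf{x}_t\|_2^2+\eta\lambda\|\mathbf{x}\|_1$. The randomization map $\mathcal{R}:[0,1]^n\to\{0,1\}^n$ returns a random vector whose $i$-th entry is a Bernoulli random variable with success probability $\mathbf{x}_t(i)$, so that $\mathbb{E}[\mathcal{R}(\mathbf{x}_t)]=\mathbf{x}_t$. *)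

theory Defs
  imports "HOL-Analysis.Analysis" "HOL-Probability.Probability"
begin

definition unit_cube :: "(real ^ 'n) set" where
  "unit_cube = cbox 0 1"

definition randomize :: "real ^ 'n \<Rightarrow> (real ^ 'n) pmf" where
  "randomize x = map_pmf (\<lambda>b. \<chi> i. if b i then 1 else 0)
      (Pi_pmf UNIV False (\<lambda>i. bernoulli_pmf (x $ i)))"

end

theory Submission
  imports Defs
begin

theorem lemma2:
  fixes f :: "real ^ 'n \<Rightarrow> real"
    and grad :: "real ^ 'n \<Rightarrow> real ^ 'n"
    and L2 :: real
    and x :: "real ^ 'n"
  assumes deriv: "\<forall>y\<in>unit_cube. (f has_derivative (\<lambda>h. grad y \<bullet> h)) (at y within unit_cube)"
    and conv: "convex_on unit_cube f"
    and bdd: "bounded (f ` unit_cube)"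
    and gradbd: "\<forall>y\<in>unit_cube. norm (grad y) \<le> L2"
    and L2pos: "L2 > 0"
    and x_in: "x \<in> unit_cube"
  shows "measure_pmf.expectation (randomize x) (\<lambda>y. \<bar>f y - f x\<bar>)
           \<le> L2 * sqrt (real CARD('n)) / 2"
proof -
  define p where "p = Pi_pmf UNIV False (\<lambda>i. bernoulli_pmf (x $ i))"
  define g :: "('n \<Rightarrow> bool) \<Rightarrow> real ^ 'n" where "g = (\<lambda>b. \<chi> i. if b i then 1 else 0)"
  define a where "a = sqrt (real CARD('n)) / 2"
  have apos: "a > 0" unfolding a_def by simp
  have a2: "a^2 = real CARD('n) / 4" unfolding a_def by (simp add: power_divide)
  have xi: "0 \<le> x $ i \<and> x $ i \<le> 1" for i
    using x_in unfolding unit_cube_def by (simp add: mem_box_cart)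
  have gin: "g b \<in> unit_cube" for b
    unfolding unit_cube_def g_def by (simp add: mem_box_cart)
  have cvx: "convex (unit_cube :: (real^'n) set)" unfolding unit_cube_def by simp
  have lip: "\<bar>f y - f z\<bar> \<le> L2 * norm (y - z)" if "y \<in> unit_cube" "z \<in> unit_cube" for y z
  proof -
    have "norm (f y - f z) \<le> L2 * norm (y - z)"
    proof (rule differentiable_bound[OF cvx])
      show "(f has_derivative (\<lambda>h. grad u \<bullet> h)) (at u within unit_cube)" if "u \<in> unit_cube" for u
        using deriv that by blast
      show "onorm (\<lambda>h. grad u \<bullet> h) \<le> L2" if "u \<in> unit_cube" for u
        using onorm_inner_right[OF bounded_linear_ident, of "grad u"] gradbd that by (auto simp: onorm_id)
    qed (use that in auto)
    then show ?thesis by simp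
  qed
  have fin: "finite (set_pmf p)" by (rule finite_subset[of _ UNIV]) auto
  have int: "integrable (measure_pmf p) h" for h :: "('n \<Rightarrow> bool) \<Rightarrow> real"
    by (rule integrable_measure_pmf_finite[OF fin])
  have E: "measure_pmf.expectation (randomize x) (\<lambda>y. \<bar>f y - f x\<bar>)
        = measure_pmf.expectation p (\<lambda>b. \<bar>f (g b) - f x\<bar>)"
    unfolding randomize_def p_def g_def by simp
  have comp: "measure_pmf.expectation p (\<lambda>b. (g b $ i - x $ i)^2) = x $ i * (1 - x $ i)" for i
  proof -
    have "measure_pmf.expectation p (\<lambda>b. (g b $ i - x $ i)^2)
        = measure_pmf.expectation (map_pmf (\<lambda>b. b i) p) (\<lambda>c. ((if c then 1 else 0) - x $ i)^2)"
      by (simp add: g_def)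
    also have "map_pmf (\<lambda>b. b i) p = bernoulli_pmf (x $ i)"
      unfolding p_def by (subst Pi_pmf_component) auto
    also have "measure_pmf.expectation (bernoulli_pmf (x $ i)) (\<lambda>c. ((if c then 1 else 0) - x $ i)^2)
        = x $ i * (1 - x $ i)"
      using xi[of i] by (simp add: power2_eq_square algebra_simps)
    finally show ?thesis .
  qed
  have nsq: "(norm v)^2 = (\<Sum>i\<in>UNIV. (v $ i)^2)" for v :: "real^'n"
    unfolding power2_norm_eq_inner inner_vec_def by (simp add: power2_eq_square)
  have sq: "measure_pmf.expectation p (\<lambda>b. (norm (g b - x))^2) \<le> a^2"
  proof -
    have "measure_pmf.expectation p (\<lambda>b. (norm (g b - x))^2)
        = measure_pmf.expectation p (\<lambda>b. \<Sum>i\<in>UNIV. (g b $ i - x $ i)^2)"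
      by (rule Bochner_Integration.integral_cong) (simp_all only: nsq vector_minus_component)
    also have "\<dots> = (\<Sum>i\<in>UNIV. measure_pmf.expectation p (\<lambda>b. (g b $ i - x $ i)^2))"
      by (rule Bochner_Integration.integral_sum) (rule int)
    also have "\<dots> = (\<Sum>i\<in>UNIV. x $ i * (1 - x $ i))" by (simp add: comp)
    also have "\<dots> \<le> (\<Sum>i\<in>(UNIV::'n set). 1/4)"
    proof (rule sum_mono)
      fix i :: 'n
      have "0 \<le> (x $ i - 1/2)^2" by simp
      then show "x $ i * (1 - x $ i) \<le> 1/4" by (simp add: power2_eq_square algebra_simps)
    qed
    also have "\<dots> = a^2" using a2 by simp
    finally show ?thesis .
  qed
  have "measure_pmf.expectation p (\<lambda>b. \<bar>f (g b) - f x\<bar>)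
      \<le> measure_pmf.expectation p (\<lambda>b. L2 * ((norm (g b - x))^2 + a^2) / (2 * a))"
  proof (rule integral_mono[OF int int])
    fix b
    have "0 \<le> (norm (g b - x) - a)^2" by simp
    then have "norm (g b - x) \<le> ((norm (g b - x))^2 + a^2) / (2 * a)"
      using apos by (simp add: field_simps power2_eq_square)
    then have "L2 * norm (g b - x) \<le> L2 * (((norm (g b - x))^2 + a^2) / (2 * a))"
      using L2pos by (intro mult_left_mono) auto
    then show "\<bar>f (g b) - f x\<bar> \<le> L2 * ((norm (g b - x))^2 + a^2) / (2 * a)"
      using lip[OF gin x_in, of b] by simp
  qed
  also have "\<dots> = L2 / (2 * a) * (measure_pmf.expectation p (\<lambda>b. (norm (g b - x))^2) + a^2)"
    by (simp add: Bochner_Integration.integral_add[OF int int] field_simps)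
  also have "\<dots> \<le> L2 / (2 * a) * (a^2 + a^2)"
    using sq apos L2pos by (intro mult_left_mono) auto
  also have "\<dots> = L2 * a" using apos by (simp add: power2_eq_square field_simps)
  finally show ?thesis using E by (simp add: a_def)
qed

end
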